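(* Let $X$ be a locally solid $f$-algebra with a multiplicative unit $e$. If either $Orth_b(X)$ (with the topology of uniform convergence on bounded sets) or $Orth_c(X)$ (with the topology of equicontinuous convergence) possesses the Lebesgue property, then $X$ possesses the Lebesgue property.
   Context: All vector lattices are Archimedean. An $f$-algebra is a Riesz algebra such that $x\wedge y=0$ implies $zx\wedge y=xz\wedge y=0$ for every $z\ge0$; a locally solid $f$-algebra is an $f$-algebra with a linear topology having a base of solid zero neighborhoods. An orthomorphism is an order bounded linear operator $T$ with $T(x)\perp y$ whenever $x\perp y$ ($x\perp y$ means $|x|\wedge|y|=0$). $Orth_b(X)$: orthomorphisms mapping bounded sets to bounded sets, with $S_\alpha\to0$ iff for every bounded $B$ and zero neighborhood $V$ there is $\alpha_0$ with $S_\alpha(B)\subseteq V$ for $\alpha\ge\alpha_0$. $Orth_c(X)$: continuous orthomorphisms, with $S_\alpha\to0$ iff for every zero neighborhood $V$ there is a zero neighborhood $U$ such that for every $\varepsilon>0$ there is $\alpha_0$ with $S_\alpha(U)\subseteq\varepsilon V$ for $\alpha\ge\alpha_0$. A locally solid vector lattice $(E,\tau)$ has the Lebesgue property if for every net $(u_\alpha)$ in $E$, $u_\alpha\downarrow 0$ implies $u_\alpha\to0$ in $\tau$. *)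

theory Defs
  imports "HOL-Analysis.Analysis"
begin

text \<open>Vector lattices are modelled as types of class ordered_real_vector + lattice
(a Riesz space); the Archimedean property is an explicit assumption.\<close>

definition labs :: "'a::{ordered_real_vector,lattice} \<Rightarrow> 'a" where
  "labs x = sup x (- x)"

definition disj :: "'a::{ordered_real_vector,lattice} \<Rightarrow> 'a \<Rightarrow> bool" where
  "disj x y \<longleftrightarrow> inf (labs x) (labs y) = 0"

definition archimedean_vl :: "'a::{ordered_real_vector,lattice} set \<Rightarrow> bool" where
  "archimedean_vl X \<longleftrightarrow>
     (\<forall>x\<in>X. \<forall>y\<in>X. 0 \<le> x \<and> (\<forall>n::nat. real n *\<^sub>R x \<le> y) \<longrightarrow> x = 0)"

definition riesz_algebra :: "('a::{ordered_real_vector,lattice} \<Rightarrow> 'a \<Rightarrow> 'a) \<Rightarrow> bool" where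
  "riesz_algebra m \<longleftrightarrow> bilinear m \<and> (\<forall>x y z. m (m x y) z = m x (m y z))
     \<and> (\<forall>x y. 0 \<le> x \<longrightarrow> 0 \<le> y \<longrightarrow> 0 \<le> m x y)"

definition f_algebra :: "('a::{ordered_real_vector,lattice} \<Rightarrow> 'a \<Rightarrow> 'a) \<Rightarrow> bool" where
  "f_algebra m \<longleftrightarrow> riesz_algebra m \<and>
     (\<forall>x y z. inf x y = 0 \<and> 0 \<le> z \<longrightarrow> inf (m z x) y = 0 \<and> inf (m x z) y = 0)"

definition mult_unit :: "('a \<Rightarrow> 'a \<Rightarrow> 'a) \<Rightarrow> 'a \<Rightarrow> bool" where
  "mult_unit m e \<longleftrightarrow> (\<forall>x. m e x = x \<and> m x e = x)"

definition linear_topology :: "'a::real_vector topology \<Rightarrow> bool" where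
  "linear_topology T \<longleftrightarrow> topspace T = UNIV
     \<and> continuous_map (prod_topology T T) T (\<lambda>(x, y). x + y)
     \<and> continuous_map (prod_topology euclideanreal T) T (\<lambda>(c, x). c *\<^sub>R x)"

definition zero_nbhd :: "'a::real_vector topology \<Rightarrow> 'a set \<Rightarrow> bool" where
  "zero_nbhd T V \<longleftrightarrow> (\<exists>W. openin T W \<and> 0 \<in> W \<and> W \<subseteq> V)"

definition solid :: "'a::{ordered_real_vector,lattice} set \<Rightarrow> bool" where
  "solid V \<longleftrightarrow> (\<forall>x y. x \<in> V \<longrightarrow> labs y \<le> labs x \<longrightarrow> y \<in> V)"

definition locally_solid :: "'a::{ordered_real_vector,lattice} topology \<Rightarrow> bool" where
  "locally_solid T \<longleftrightarrow> linear_topology T \<and>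
     (\<forall>V. zero_nbhd T V \<longrightarrow> (\<exists>W. zero_nbhd T W \<and> solid W \<and> W \<subseteq> V))"

definition tv_bounded :: "'a::real_vector topology \<Rightarrow> 'a set \<Rightarrow> bool" where
  "tv_bounded T B \<longleftrightarrow>
     (\<forall>V. zero_nbhd T V \<longrightarrow> (\<exists>s>0. \<forall>t. t > s \<longrightarrow> B \<subseteq> (\<lambda>x. t *\<^sub>R x) ` V))"

definition order_bounded_op :: "('a::{ordered_real_vector,lattice} \<Rightarrow> 'a) \<Rightarrow> bool" where
  "order_bounded_op S \<longleftrightarrow> (\<forall>a b. \<exists>c d. S ` {a..b} \<subseteq> {c..d})"

definition orthomorphism :: "('a::{ordered_real_vector,lattice} \<Rightarrow> 'a) \<Rightarrow> bool" where
  "orthomorphism S \<longleftrightarrow> linear S \<and> order_bounded_op S \<and> (\<forall>x y. disj x y \<longrightarrow> disj (S x) y)"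

definition Orth_b :: "'a::{ordered_real_vector,lattice} topology \<Rightarrow> ('a \<Rightarrow> 'a) set" where
  "Orth_b T = {S. orthomorphism S \<and> (\<forall>B. tv_bounded T B \<longrightarrow> tv_bounded T (S ` B))}"

definition Orth_c :: "'a::{ordered_real_vector,lattice} topology \<Rightarrow> ('a \<Rightarrow> 'a) set" where
  "Orth_c T = {S. orthomorphism S \<and> continuous_map T T S}"

definition op_le :: "('a::{ordered_real_vector,lattice} \<Rightarrow> 'a) \<Rightarrow> ('a \<Rightarrow> 'a) \<Rightarrow> bool" where
  "op_le S R \<longleftrightarrow> (\<forall>x. 0 \<le> x \<longrightarrow> S x \<le> R x)"

definition directed_index :: "'j set \<Rightarrow> ('j \<Rightarrow> 'j \<Rightarrow> bool) \<Rightarrow> bool" where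
  "directed_index I le \<longleftrightarrow> I \<noteq> {} \<and> (\<forall>a\<in>I. le a a)
     \<and> (\<forall>a\<in>I. \<forall>b\<in>I. \<forall>c\<in>I. le a b \<and> le b c \<longrightarrow> le a c)
     \<and> (\<forall>a\<in>I. \<forall>b\<in>I. \<exists>c\<in>I. le a c \<and> le b c)"

definition decr_to_zero :: "'j set \<Rightarrow> ('j \<Rightarrow> 'j \<Rightarrow> bool) \<Rightarrow> ('j \<Rightarrow> 'a::{ordered_real_vector,lattice}) \<Rightarrow> bool" where
  "decr_to_zero I le u \<longleftrightarrow> (\<forall>a\<in>I. \<forall>b\<in>I. le a b \<longrightarrow> u b \<le> u a)
     \<and> (\<forall>a\<in>I. 0 \<le> u a) \<and> (\<forall>w. (\<forall>a\<in>I. w \<le> u a) \<longrightarrow> w \<le> 0)"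

definition net_to_zero :: "'a::real_vector topology \<Rightarrow> 'j set \<Rightarrow> ('j \<Rightarrow> 'j \<Rightarrow> bool) \<Rightarrow> ('j \<Rightarrow> 'a) \<Rightarrow> bool" where
  "net_to_zero T I le u \<longleftrightarrow>
     (\<forall>V. zero_nbhd T V \<longrightarrow> (\<exists>a0\<in>I. \<forall>a\<in>I. le a0 a \<longrightarrow> u a \<in> V))"

text \<open>Lebesgue property of (X,T), for nets indexed by (subsets of) the type 'j.\<close>
definition lebesgue_property :: "'a::{ordered_real_vector,lattice} topology \<Rightarrow> 'j itself \<Rightarrow> bool" where
  "lebesgue_property T J \<longleftrightarrow>
     (\<forall>(I::'j set) le u. directed_index I le \<and> decr_to_zero I le u \<longrightarrow> net_to_zero T I le u)"

text \<open>S_alpha decreases to 0 in the vector lattice O of orthomorphisms (infimum taken in O).\<close>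
definition orth_decr_to_zero :: "('a::{ordered_real_vector,lattice} \<Rightarrow> 'a) set \<Rightarrow> 'j set \<Rightarrow> ('j \<Rightarrow> 'j \<Rightarrow> bool)
    \<Rightarrow> ('j \<Rightarrow> 'a \<Rightarrow> 'a) \<Rightarrow> bool" where
  "orth_decr_to_zero Os I le S \<longleftrightarrow> (\<forall>a\<in>I. S a \<in> Os)
     \<and> (\<forall>a\<in>I. \<forall>b\<in>I. le a b \<longrightarrow> op_le (S b) (S a))
     \<and> (\<forall>a\<in>I. op_le (\<lambda>_. 0) (S a))
     \<and> (\<forall>R\<in>Os. (\<forall>a\<in>I. op_le R (S a)) \<longrightarrow> op_le R (\<lambda>_. 0))"

definition orth_b_to_zero :: "'a::{ordered_real_vector,lattice} topology \<Rightarrow> 'j set \<Rightarrow> ('j \<Rightarrow> 'j \<Rightarrow> bool)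
    \<Rightarrow> ('j \<Rightarrow> 'a \<Rightarrow> 'a) \<Rightarrow> bool" where
  "orth_b_to_zero T I le S \<longleftrightarrow> (\<forall>B V. tv_bounded T B \<and> zero_nbhd T V \<longrightarrow>
     (\<exists>a0\<in>I. \<forall>a\<in>I. le a0 a \<longrightarrow> S a ` B \<subseteq> V))"

definition orth_c_to_zero :: "'a::{ordered_real_vector,lattice} topology \<Rightarrow> 'j set \<Rightarrow> ('j \<Rightarrow> 'j \<Rightarrow> bool)
    \<Rightarrow> ('j \<Rightarrow> 'a \<Rightarrow> 'a) \<Rightarrow> bool" where
  "orth_c_to_zero T I le S \<longleftrightarrow> (\<forall>V. zero_nbhd T V \<longrightarrow> (\<exists>U. zero_nbhd T U \<and>
     (\<forall>\<epsilon>>0. \<exists>a0\<in>I. \<forall>a\<in>I. le a0 a \<longrightarrow> S a ` U \<subseteq> (\<lambda>x. \<epsilon> *\<^sub>R x) ` V)))"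

definition lebesgue_Orth_b :: "'a::{ordered_real_vector,lattice} topology \<Rightarrow> 'j itself \<Rightarrow> bool" where
  "lebesgue_Orth_b T J \<longleftrightarrow>
     (\<forall>(I::'j set) le S. directed_index I le \<and> orth_decr_to_zero (Orth_b T) I le S
        \<longrightarrow> orth_b_to_zero T I le S)"

definition lebesgue_Orth_c :: "'a::{ordered_real_vector,lattice} topology \<Rightarrow> 'j itself \<Rightarrow> bool" where
  "lebesgue_Orth_c T J \<longleftrightarrow>
     (\<forall>(I::'j set) le S. directed_index I le \<and> orth_decr_to_zero (Orth_c T) I le S
        \<longrightarrow> orth_c_to_zero T I le S)"

end

theory Submission
  imports Defs
begin



lemma rv_add_inf: "(c::'a::{ordered_real_vector,lattice}) + inf a b = inf (c+a) (c+b)"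
proof (rule antisym)
  show "c + inf a b \<le> inf (c+a) (c+b)" by (simp add: add_left_mono)
  have "inf (c+a) (c+b) \<le> c + a" "inf (c+a) (c+b) \<le> c + b" by simp_all
  hence "inf (c+a) (c+b) - c \<le> a" "inf (c+a) (c+b) - c \<le> b"
    by (simp_all add: diff_le_eq add.commute)
  hence "inf (c+a) (c+b) - c \<le> inf a b" by simp
  thus "inf (c+a) (c+b) \<le> c + inf a b" by (metis diff_le_eq add.commute)
qed

lemma rv_add_sup: "(c::'a::{ordered_real_vector,lattice}) + sup a b = sup (c+a) (c+b)"
proof (rule antisym)
  show "sup (c+a) (c+b) \<le> c + sup a b" by (simp add: add_left_mono)
  have "a \<le> sup (c+a) (c+b) - c" "b \<le> sup (c+a) (c+b) - c"
    by (simp_all add: le_diff_eq add.commute)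
  hence "sup a b \<le> sup (c+a) (c+b) - c" by simp
  thus "c + sup a b \<le> sup (c+a) (c+b)" by (simp add: le_diff_eq add.commute)
qed

lemma rv_neg_inf: "- inf (a::'a::{ordered_real_vector,lattice}) b = sup (-a) (-b)"
proof (rule antisym)
  have "- sup (-a) (-b) \<le> a" "- sup (-a) (-b) \<le> b"
    by (simp_all add: minus_le_iff)
  hence "- sup (-a) (-b) \<le> inf a b" by simp
  thus "- inf a b \<le> sup (-a) (-b)" by (metis minus_le_iff)
  show "sup (-a) (-b) \<le> - inf a b" by simp
qed

lemma rv_neg_sup: "- sup (a::'a::{ordered_real_vector,lattice}) b = inf (-a) (-b)"
  using rv_neg_inf[of "-a" "-b"] by (metis minus_minus)

lemma rv_pos_neg_disj: "inf (sup (d::'a::{ordered_real_vector,lattice}) 0) (sup (-d) 0) = 0"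
proof -
  have 1: "sup (-d) 0 = sup d 0 - d" using rv_add_sup[of "-d" d 0] by (simp add: sup_commute)
  have "inf (sup d 0) (sup d 0 - d) = sup d 0 + inf 0 (-d)"
    using rv_add_inf[of "sup d 0" 0 "-d"] by simp
  also have "inf 0 (-d) = - sup 0 d" using rv_neg_sup[of 0 d] by simp
  finally show ?thesis using 1 by (simp add: sup_commute)
qed

lemma rv_sum_sup_inf: "(a::'a::{ordered_real_vector,lattice}) + b = sup a b + inf a b"
proof -
  have "a + b + sup (-a) (-b) = sup b a" using rv_add_sup[of "a+b" "-a" "-b"]
    by (simp add: add.commute add.left_commute)
  hence "a + b = sup a b - sup (-a) (-b)" by (simp add: sup_commute eq_diff_eq)
  moreover have "- sup (-a) (-b) = inf a b" using rv_neg_sup[of "-a" "-b"] by simp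
  ultimately show ?thesis by simp
qed

lemma rv_sub_pos: "(a::'a::{ordered_real_vector,lattice}) - sup (a - b) 0 = inf b a"
proof -
  have "- sup (a - b) 0 = inf (b - a) 0" using rv_neg_sup[of "a-b" 0] by simp
  hence "a - sup (a - b) 0 = a + inf (b - a) 0" by simp
  also have "\<dots> = inf b a" using rv_add_inf[of a "b-a" 0] by simp
  finally show ?thesis .
qed

lemma rv_inf_add_le:
  fixes q z g :: "'a::{ordered_real_vector,lattice}"
  assumes "0 \<le> q" "0 \<le> z" "0 \<le> g"
  shows "inf q (z+g) \<le> inf q z + inf q g"
proof -
  have a: "inf q (z+g) \<le> inf q z + q"
    using assms by (meson add_increasing inf_le1 inf_greatest order_trans)
  have "inf q (z+g) \<le> inf (q+g) (z+g)" using assms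
    by (meson add_increasing2 inf_mono order_refl)
  also have "\<dots> = inf q z + g" using rv_add_inf[of g q z] by (simp add: add.commute)
  finally have b: "inf q (z+g) \<le> inf q z + g" .
  have "inf (inf q z + q) (inf q z + g) = inf q z + inf q g" using rv_add_inf[of "inf q z" q g] by simp
  with a b show ?thesis by (metis le_inf_iff)
qed

lemma labs_ge0: "0 \<le> labs (x::'a::{ordered_real_vector,lattice})"
proof -
  have "x \<le> labs x" "-x \<le> labs x" by (simp_all add: labs_def)
  hence "x + -x \<le> labs x + labs x" by (rule add_mono)
  hence "0 \<le> (2::real) *\<^sub>R labs x" by (simp add: scaleR_2)
  thus ?thesis by (simp add: zero_le_scaleR_iff)
qed

lemma labs_pos: "0 \<le> (x::'a::{ordered_real_vector,lattice}) \<Longrightarrow> labs x = x"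
  unfolding labs_def by (simp add: sup_absorb1 order_trans[of "-x" 0 x])

lemma rv_pos_minus_neg: "sup (d::'a::{ordered_real_vector,lattice}) 0 - sup (-d) 0 = d"
  using rv_add_sup[of "-d" d 0] by (simp add: sup_commute algebra_simps)

lemma fa_bil: "f_algebra m \<Longrightarrow> bilinear m"
  by (simp add: f_algebra_def riesz_algebra_def)

lemma fa_pos: "f_algebra m \<Longrightarrow> 0 \<le> x \<Longrightarrow> 0 \<le> y \<Longrightarrow> 0 \<le> m x y"
  by (simp add: f_algebra_def riesz_algebra_def)

lemma fa_disj:
  "f_algebra m \<Longrightarrow> inf x y = 0 \<Longrightarrow> 0 \<le> z \<Longrightarrow> inf (m z x) y = 0 \<and> inf (m x z) y = 0"
  by (simp add: f_algebra_def)

lemma fa_mono_l: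
  fixes m :: "'a::{ordered_real_vector,lattice} \<Rightarrow> 'a \<Rightarrow> 'a"
  assumes "f_algebra m" "a \<le> b" "0 \<le> x" shows "m a x \<le> m b x"
proof -
  have "0 \<le> m (b - a) x" using assms fa_pos by (simp add: fa_pos)
  also have "m (b - a) x = m b x - m a x" using bilinear_lsub[OF fa_bil[OF assms(1)]] by simp
  finally show ?thesis by simp
qed

lemma fa_mono_r:
  fixes m :: "'a::{ordered_real_vector,lattice} \<Rightarrow> 'a \<Rightarrow> 'a"
  assumes "f_algebra m" "x \<le> y" "0 \<le> v" shows "m v x \<le> m v y"
proof -
  have "0 \<le> m v (y - x)" using assms fa_pos by (simp add: fa_pos)
  also have "m v (y - x) = m v y - m v x" using bilinear_rsub[OF fa_bil[OF assms(1)]] by simp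
  finally show ?thesis by simp
qed

lemma fa_sq_nonneg:
  fixes m :: "'a::{ordered_real_vector,lattice} \<Rightarrow> 'a \<Rightarrow> 'a"
  assumes fa: "f_algebra m" shows "0 \<le> m x x"
proof -
  define p where "p = sup x 0"
  define n where "n = sup (-x) 0"
  have x: "x = p - n" using rv_pos_minus_neg[of x] by (simp add: p_def n_def)
  have pn: "inf p n = 0" using rv_pos_neg_disj[of x] by (simp add: p_def n_def)
  have p0: "0 \<le> p" and n0: "0 \<le> n" by (simp_all add: p_def n_def)
  have "inf (m p n) p = 0" using fa_disj[OF fa, of n p p] pn p0 by (simp add: inf_commute)
  hence "inf p (m p n) = 0" by (simp add: inf_commute)
  hence "inf (m p n) (m p n) = 0" using fa_disj[OF fa, of p "m p n" n] n0 by simp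
  hence mpn: "m p n = 0" by simp
  have "inf (m n p) n = 0" using fa_disj[OF fa, of p n n] pn n0 by simp
  hence "inf n (m n p) = 0" by (simp add: inf_commute)
  hence "inf (m n p) (m n p) = 0" using fa_disj[OF fa, of n "m n p" p] p0 by simp
  hence mnp: "m n p = 0" by simp
  have b: "bilinear m" using fa_bil[OF fa] .
  have "m x x = m p p - m p n - (m n p - m n n)"
    unfolding x using bilinear_lsub[OF b] bilinear_rsub[OF b] by simp
  also have "\<dots> = m p p + m n n" using mpn mnp by simp
  finally show ?thesis using fa_pos[OF fa] p0 n0 by simp
qed

lemma unit_nonneg:
  fixes m :: "'a::{ordered_real_vector,lattice} \<Rightarrow> 'a \<Rightarrow> 'a"
  assumes "f_algebra m" "mult_unit m e" shows "0 \<le> e"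
  using fa_sq_nonneg[OF assms(1), of e] assms(2) by (simp add: mult_unit_def)

lemma fa_labs_le:
  fixes m :: "'a::{ordered_real_vector,lattice} \<Rightarrow> 'a \<Rightarrow> 'a"
  assumes fa: "f_algebra m" and u: "mult_unit m e" and v: "0 \<le> v" "v \<le> e"
  shows "labs (m v x) \<le> labs x"
proof -
  have l0: "0 \<le> labs x" by (rule labs_ge0)
  have e: "m e (labs x) = labs x" using u by (simp add: mult_unit_def)
  have "m v x \<le> m v (labs x)" using fa_mono_r[OF fa _ v(1)] by (simp add: labs_def)
  also have "\<dots> \<le> m e (labs x)" using fa_mono_l[OF fa v(2) l0] .
  finally have 1: "m v x \<le> labs x" using e by simp
  have "- m v x = m v (-x)" using bilinear_rneg[OF fa_bil[OF fa]] by simp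
  also have "\<dots> \<le> m v (labs x)" using fa_mono_r[OF fa _ v(1)] by (simp add: labs_def)
  also have "\<dots> \<le> m e (labs x)" using fa_mono_l[OF fa v(2) l0] .
  finally have 2: "- m v x \<le> labs x" using e by simp
  show ?thesis using 1 2 by (simp add: labs_def)
qed


lemma fa_order_cont:
  fixes m :: "'a::{ordered_real_vector,lattice} \<Rightarrow> 'a \<Rightarrow> 'a"
  assumes fa: "f_algebra m" and arch: "archimedean_vl (UNIV :: 'a set)"
    and dir: "directed_index I le"
    and dec: "\<forall>a\<in>I. \<forall>b\<in>I. le a b \<longrightarrow> v b \<le> v a"
    and pos: "\<forall>a\<in>I. 0 \<le> v a"
    and inf0: "\<forall>w. (\<forall>a\<in>I. w \<le> v a) \<longrightarrow> w \<le> 0"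
    and x0: "0 \<le> x" and y0: "0 \<le> y" and yle: "\<forall>a\<in>I. y \<le> m (v a) x"
  shows "y = 0"
proof -
  have b: "bilinear m" using fa_bil[OF fa] .
  obtain a0 where a0: "a0 \<in> I" using dir unfolding directed_index_def by blast
  define u where "u = v a0"
  have u0: "0 \<le> u" using pos a0 by (simp add: u_def)
  have mux0: "0 \<le> m u x" using fa_pos[OF fa u0 x0] .
  have yu: "y \<le> m u x" using yle a0 by (simp add: u_def)
  have key: "real n *\<^sub>R y \<le> m u x" for n :: nat
  proof (cases "n = 0")
    case True thus ?thesis using mux0 by simp
  next
    case False
    define \<epsilon> :: real where "\<epsilon> = 1 / real n"
    have \<epsilon>0: "0 < \<epsilon>" and \<epsilon>1: "\<epsilon> \<le> 1" using False by (simp_all add: \<epsilon>_def)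
    define p where "p = sup (y - \<epsilon> *\<^sub>R m u x) 0"
    have p0: "0 \<le> p" by (simp add: p_def)
    have eu0: "0 \<le> \<epsilon> *\<^sub>R u" using \<epsilon>0 u0 by (simp add: scaleR_nonneg_nonneg)
    have pz: "inf p (sup (\<epsilon> *\<^sub>R u - v a) 0) = 0" if a: "a \<in> I" for a
    proof -
      define r where "r = sup (v a - \<epsilon> *\<^sub>R u) 0"
      have r0: "0 \<le> r" by (simp add: r_def)
      have "v a - \<epsilon> *\<^sub>R u \<le> r" by (simp add: r_def)
      hence "v a \<le> r + \<epsilon> *\<^sub>R u" by (simp add: diff_le_eq)
      hence "m (v a) x \<le> m (r + \<epsilon> *\<^sub>R u) x" using fa_mono_l[OF fa _ x0] by blast
      also have "\<dots> = m r x + \<epsilon> *\<^sub>R m u x" using bilinear_ladd[OF b] bilinear_lmul[OF b] by simp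
      finally have "y \<le> m r x + \<epsilon> *\<^sub>R m u x" using yle a by (meson order_trans)
      hence "y - \<epsilon> *\<^sub>R m u x \<le> m r x" by (simp add: diff_le_eq)
      hence pr: "p \<le> m r x" using fa_pos[OF fa r0 x0] by (simp add: p_def)
      have "inf r (sup (\<epsilon> *\<^sub>R u - v a) 0) = 0"
        using rv_pos_neg_disj[of "v a - \<epsilon> *\<^sub>R u"] by (simp add: r_def)
      hence "inf (m r x) (sup (\<epsilon> *\<^sub>R u - v a) 0) = 0" using fa_disj[OF fa _ x0] by blast
      hence "inf p (sup (\<epsilon> *\<^sub>R u - v a) 0) \<le> 0" using pr by (metis inf_mono order_refl)
      moreover have "0 \<le> inf p (sup (\<epsilon> *\<^sub>R u - v a) 0)" using p0 by simp
      ultimately show ?thesis by simp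
    qed
    define q where "q = inf p (\<epsilon> *\<^sub>R u)"
    have q0: "0 \<le> q" using p0 eu0 by (simp add: q_def)
    have qv: "q \<le> v a" if a: "a \<in> I" "le a0 a" for a
    proof -
      define z where "z = sup (\<epsilon> *\<^sub>R u - v a) 0"
      define g where "g = inf (v a) (\<epsilon> *\<^sub>R u)"
      have eq: "\<epsilon> *\<^sub>R u = z + g" using rv_sub_pos[of "\<epsilon> *\<^sub>R u" "v a"]
        by (simp add: z_def g_def eq_diff_eq' algebra_simps)
      have z0: "0 \<le> z" by (simp add: z_def)
      have g0: "0 \<le> g" using pos a eu0 by (simp add: g_def)
      have "q = inf q (z + g)" using eq by (simp add: q_def)
      also have "\<dots> \<le> inf q z + inf q g" using rv_inf_add_le[OF q0 z0 g0] .
      also have "inf q z = 0"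
      proof -
        have "inf q z \<le> inf p z" by (simp add: q_def le_infI1)
        also have "\<dots> = 0" using pz[OF a(1)] by (simp add: z_def)
        finally show ?thesis using q0 z0 by (simp add: antisym)
      qed
      finally show ?thesis by (simp add: g_def le_infI2)
    qed
    have "q \<le> v a" if a: "a \<in> I" for a
    proof -
      obtain c where c: "c \<in> I" "le a c" "le a0 c" using dir a a0 unfolding directed_index_def by blast
      have "q \<le> v c" using qv c by blast
      also have "v c \<le> v a" using dec a c by blast
      finally show ?thesis .
    qed
    hence "q \<le> 0" using inf0 by blast
    hence q: "inf (\<epsilon> *\<^sub>R u) p = 0" using q0 by (simp add: q_def inf_commute antisym)
    have "inf (m (\<epsilon> *\<^sub>R u) x) p = 0" using fa_disj[OF fa q x0] by blast
    hence i: "inf p (\<epsilon> *\<^sub>R m u x) = 0" using bilinear_lmul[OF b] by (simp add: inf_commute)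
    have "y - \<epsilon> *\<^sub>R m u x \<le> y" using \<epsilon>0 mux0 by (simp add: scaleR_nonneg_nonneg)
    hence "p \<le> y" using y0 by (simp add: p_def)
    hence pmu: "p \<le> m u x" using yu by simp
    have "\<epsilon> *\<^sub>R p \<le> p" using \<epsilon>1 p0 by (simp add: scaleR_left_le_one_le)
    moreover have "\<epsilon> *\<^sub>R p \<le> \<epsilon> *\<^sub>R m u x" using pmu \<epsilon>0 by (simp add: scaleR_left_mono)
    ultimately have "\<epsilon> *\<^sub>R p \<le> 0" using i by (metis le_inf_iff)
    hence "p \<le> 0" using \<epsilon>0 by (simp add: scaleR_le_0_iff)
    hence "y \<le> \<epsilon> *\<^sub>R m u x" by (simp add: p_def)
    hence "real n *\<^sub>R y \<le> real n *\<^sub>R (\<epsilon> *\<^sub>R m u x)"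
      by (intro scaleR_left_mono) simp_all
    also have "\<dots> = m u x" using False by (simp add: \<epsilon>_def)
    finally show ?thesis .
  qed
  show ?thesis using arch y0 key unfolding archimedean_vl_def by blast
qed


lemma fa_unit_trick:
  fixes m :: "'a::{ordered_real_vector,lattice} \<Rightarrow> 'a \<Rightarrow> 'a"
  assumes fa: "f_algebra m" and un: "mult_unit m e" and u0: "0 \<le> u" and uw: "u \<le> w"
  shows "u \<le> m (inf u e) (w + e)"
proof -
  have b: "bilinear m" using fa_bil[OF fa] .
  have e0: "0 \<le> e" using unit_nonneg[OF fa un] .
  have w0: "0 \<le> w" using u0 uw by simp
  define r where "r = sup (u - e) 0"
  define s where "s = sup (e - u) 0"
  have ur: "u = inf e u + r" using rv_sub_pos[of u e] unfolding r_def by (metis add.commute diff_add_cancel)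
  have ue: "inf u e = e - s" using rv_sub_pos[of e u] by (simp add: s_def)
  have "m (inf u e) (w + e) = m (inf u e) w + inf u e"
    using bilinear_radd[OF b] un by (simp add: mult_unit_def)
  also have "m (inf u e) w = w - m s w" using ue bilinear_lsub[OF b] un by (simp add: mult_unit_def)
  finally have eq: "m (inf u e) (w + e) = w - m s w + inf u e" .
  have "inf r s = 0" using rv_pos_neg_disj[of "u - e"] by (simp add: r_def s_def)
  hence "inf s r = 0" by (simp add: inf_commute)
  hence d: "inf (m s w) r = 0" using fa_disj[OF fa _ w0] by blast
  have "u - e \<le> w" using e0 uw by (meson diff_le_eq le_add_same_cancel1 order_trans)
  hence rw: "r \<le> w" using w0 by (simp add: r_def)
  have "e - u \<le> e" using u0 by simp
  hence "s \<le> e" using e0 by (simp add: s_def)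
  hence "m s w \<le> m e w" using fa_mono_l[OF fa _ w0] by blast
  hence sw: "m s w \<le> w" using un by (simp add: mult_unit_def)
  have "r + m s w = sup r (m s w) + inf r (m s w)" by (rule rv_sum_sup_inf)
  also have "inf r (m s w) = 0" using d by (simp add: inf_commute)
  finally have "r + m s w \<le> w" using rw sw by simp
  hence "r \<le> w - m s w" by (simp add: le_diff_eq)
  hence "inf e u + r \<le> w - m s w + inf u e" by (simp add: inf_commute add.commute add_left_mono)
  thus ?thesis using ur eq by simp
qed

lemma mult_orth:
  fixes m :: "'a::{ordered_real_vector,lattice} \<Rightarrow> 'a \<Rightarrow> 'a"
  assumes fa: "f_algebra m" and un: "mult_unit m e" and v: "0 \<le> v" "v \<le> e"
  shows "orthomorphism (m v)"
  unfolding orthomorphism_def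
proof (intro conjI allI impI)
  show "linear (m v)" using fa_bil[OF fa] unfolding bilinear_def by (metis eta_contract_eq)
  show "order_bounded_op (m v)" unfolding order_bounded_op_def
  proof (intro allI)
    fix a b :: 'a
    define k where "k = labs a + labs b"
    have "m v ` {a..b} \<subseteq> {-k..k}"
    proof
      fix y assume "y \<in> m v ` {a..b}"
      then obtain x where x: "a \<le> x" "x \<le> b" "y = m v x" by auto
      have "x \<le> k" using x labs_ge0[of a] labs_ge0[of b]
        unfolding k_def labs_def by (meson add_increasing order_trans sup.cobounded1)
      moreover have "-x \<le> k" using x labs_ge0[of a] labs_ge0[of b]
        unfolding k_def labs_def by (meson add_increasing2 neg_le_iff_le order_trans sup.cobounded2)
      ultimately have "labs x \<le> k" by (simp add: labs_def)
      hence "labs y \<le> k" using fa_labs_le[OF fa un v] x(3) by (meson order_trans)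
      thus "y \<in> {-k..k}" unfolding labs_def by (simp add: minus_le_iff)
    qed
    thus "\<exists>c d. m v ` {a..b} \<subseteq> {c..d}" by blast
  qed
  fix x y :: 'a assume "disj x y"
  hence "inf (labs x) (labs y) = 0" by (simp add: disj_def)
  moreover have "inf (labs (m v x)) (labs y) \<le> inf (labs x) (labs y)"
    using fa_labs_le[OF fa un v] by (simp add: le_infI1)
  moreover have "0 \<le> inf (labs (m v x)) (labs y)" by (simp add: labs_ge0)
  ultimately show "disj (m v x) y" by (simp add: disj_def antisym)
qed



lemma lt_translate_open:
  fixes T :: "'a::real_vector topology"
  assumes lt: "linear_topology T" and G: "openin T G"
  shows "openin T {z. c + z \<in> G}"
proof -
  have top: "topspace T = UNIV" using lt by (simp add: linear_topology_def)
  have add: "continuous_map (prod_topology T T) T (\<lambda>(x, y). x + y)" using lt by (simp add: linear_topology_def)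
  have "continuous_map T (prod_topology T T) (\<lambda>z. (c, z))"
    by (rule continuous_map_pairedI) (simp_all add: top)
  hence "continuous_map T T ((\<lambda>(x, y). x + y) \<circ> (\<lambda>z. (c, z)))"
    using add continuous_map_compose by blast
  hence "continuous_map T T (\<lambda>z. c + z)" by (simp add: o_def)
  from openin_continuous_map_preimage[OF this G] show ?thesis by (simp add: top)
qed

lemma lt_scal_small:
  fixes T :: "'a::real_vector topology"
  assumes lt: "linear_topology T" and V: "zero_nbhd T V"
  shows "\<exists>\<delta>>0. \<forall>t. \<bar>t\<bar> < \<delta> \<longrightarrow> t *\<^sub>R z \<in> V"
proof -
  have top: "topspace T = UNIV" using lt by (simp add: linear_topology_def)
  have sc: "continuous_map (prod_topology euclideanreal T) T (\<lambda>(c, x). c *\<^sub>R x)"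
    using lt by (simp add: linear_topology_def)
  obtain W where W: "openin T W" "0 \<in> W" "W \<subseteq> V" using V by (auto simp: zero_nbhd_def)
  have "continuous_map euclideanreal (prod_topology euclideanreal T) (\<lambda>t. (t, z))"
    by (rule continuous_map_pairedI) (simp_all add: top)
  hence "continuous_map euclideanreal T ((\<lambda>(c, x). c *\<^sub>R x) \<circ> (\<lambda>t. (t, z)))"
    using sc continuous_map_compose by blast
  hence "continuous_map euclideanreal T (\<lambda>t. t *\<^sub>R z)" by (simp add: o_def)
  from openin_continuous_map_preimage[OF this W(1)]
  have "openin euclidean {t::real. t *\<^sub>R z \<in> W}" by simp
  hence "open {t::real. t *\<^sub>R z \<in> W}" by (simp only: open_openin)
  moreover have "(0::real) \<in> {t::real. t *\<^sub>R z \<in> W}" using W by simp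
  ultimately obtain \<delta> where "\<delta> > 0" "ball 0 \<delta> \<subseteq> {t::real. t *\<^sub>R z \<in> W}" by (rule openE)
  note dd = this
  have "t *\<^sub>R z \<in> V" if "\<bar>t\<bar> < \<delta>" for t
  proof -
    have "t \<in> ball 0 \<delta>" using that by (simp add: dist_real_def)
    hence "t *\<^sub>R z \<in> W" using dd(2) by blast
    thus ?thesis using W(3) by blast
  qed
  thus ?thesis using dd(1) by blast
qed

lemma lt_singleton_bounded:
  fixes T :: "'a::real_vector topology"
  assumes lt: "linear_topology T"
  shows "tv_bounded T {z}"
  unfolding tv_bounded_def
proof (intro allI impI)
  fix V assume V: "zero_nbhd T V"
  obtain \<delta> where d: "\<delta> > 0" "\<forall>t. \<bar>t\<bar> < \<delta> \<longrightarrow> t *\<^sub>R z \<in> V" using lt_scal_small[OF lt V] by blast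
  show "\<exists>s>0. \<forall>t. t > s \<longrightarrow> {z} \<subseteq> (\<lambda>x. t *\<^sub>R x) ` V"
  proof (intro exI[of _ "1/\<delta>"] conjI allI impI)
    show "0 < 1/\<delta>" using d by simp
    fix t assume t: "1/\<delta> < t"
    have "0 < 1/\<delta>" using d(1) by simp
    hence tp: "t > 0" using t by linarith
    have "1/t < \<delta>" using t d(1) tp by (simp add: divide_less_eq mult.commute)
    hence "\<bar>1/t\<bar> < \<delta>" using tp by simp
    hence "(1/t) *\<^sub>R z \<in> V" using d(2) by blast
    moreover have "z = t *\<^sub>R ((1/t) *\<^sub>R z)" using tp by simp
    ultimately show "{z} \<subseteq> (\<lambda>x. t *\<^sub>R x) ` V" by blast
  qed
qed

lemma lt_absorb:
  fixes T :: "'a::real_vector topology"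
  assumes lt: "linear_topology T" and V: "zero_nbhd T V"
  shows "\<exists>c>0. z \<in> (\<lambda>x. c *\<^sub>R x) ` V"
proof -
  obtain \<delta> where d: "\<delta> > 0" "\<forall>t. \<bar>t\<bar> < \<delta> \<longrightarrow> t *\<^sub>R z \<in> V" using lt_scal_small[OF lt V] by blast
  define c where "c = 2 / \<delta>"
  have c: "c > 0" using d by (simp add: c_def)
  have "\<bar>1/c\<bar> < \<delta>" using d by (simp add: c_def)
  hence "(1/c) *\<^sub>R z \<in> V" using d by blast
  moreover have "z = c *\<^sub>R ((1/c) *\<^sub>R z)" using c by simp
  ultimately show ?thesis using c by blast
qed

lemma ls_solid_sub:
  assumes "locally_solid T" "zero_nbhd T V"
  shows "\<exists>W. zero_nbhd T W \<and> solid W \<and> W \<subseteq> V"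
  using assms by (simp add: locally_solid_def)

lemma dom_continuous:
  fixes T :: "'a::{ordered_real_vector,lattice} topology"
  assumes ls: "locally_solid T" and lin: "linear P" and dom: "\<forall>x. labs (P x) \<le> labs x"
  shows "continuous_map T T P"
proof -
  have lt: "linear_topology T" using ls by (simp add: locally_solid_def)
  have top: "topspace T = UNIV" using lt by (simp add: linear_topology_def)
  show ?thesis unfolding continuous_map_def
  proof (intro conjI allI impI)
    show "P \<in> topspace T \<rightarrow> topspace T" by (simp add: top)
    fix G assume G: "openin T G"
    have "openin T {x. P x \<in> G}"
    proof (subst openin_subopen, intro ballI)
      fix x assume "x \<in> {x. P x \<in> G}"
      hence Px: "P x \<in> G" by simp
      have "openin T {z. P x + z \<in> G}" using lt_translate_open[OF lt G] .
      hence "zero_nbhd T {z. P x + z \<in> G}" using Px unfolding zero_nbhd_def by force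
      then obtain W where W: "zero_nbhd T W" "solid W" "W \<subseteq> {z. P x + z \<in> G}"
        using ls_solid_sub[OF ls] by blast
      obtain W0 where W0: "openin T W0" "0 \<in> W0" "W0 \<subseteq> W" using W(1) by (auto simp: zero_nbhd_def)
      define N where "N = {z. -x + z \<in> W0}"
      have "openin T N" unfolding N_def by (rule lt_translate_open[OF lt W0(1)])
      moreover have "x \<in> N" using W0 by (simp add: N_def)
      moreover have "N \<subseteq> {x. P x \<in> G}"
      proof
        fix z assume "z \<in> N"
        hence "z - x \<in> W" using W0 by (auto simp: N_def)
        hence "P (z - x) \<in> W" using W(2) dom unfolding solid_def by blast
        hence "P x + P (z - x) \<in> G" using W(3) by blast
        thus "z \<in> {x. P x \<in> G}" using linear_diff[OF lin] by simp
      qed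
      ultimately show "\<exists>N. openin T N \<and> x \<in> N \<and> N \<subseteq> {x. P x \<in> G}" by blast
    qed
    thus "openin T {x \<in> topspace T. P x \<in> G}" by (simp add: top)
  qed
qed

lemma dom_bounded:
  fixes T :: "'a::{ordered_real_vector,lattice} topology"
  assumes ls: "locally_solid T" and lin: "linear P" and dom: "\<forall>x. labs (P x) \<le> labs x"
    and B: "tv_bounded T B"
  shows "tv_bounded T (P ` B)"
  unfolding tv_bounded_def
proof (intro allI impI)
  fix V assume V: "zero_nbhd T V"
  obtain W where W: "zero_nbhd T W" "solid W" "W \<subseteq> V" using ls_solid_sub[OF ls V] by blast
  have "\<exists>s>0. \<forall>t. t > s \<longrightarrow> B \<subseteq> (\<lambda>x. t *\<^sub>R x) ` W"
    using B W(1) unfolding tv_bounded_def by (elim allE[of _ W]) simp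
  then obtain s where s: "s > 0" "\<forall>t. t > s \<longrightarrow> B \<subseteq> (\<lambda>x. t *\<^sub>R x) ` W"
    by blast
  show "\<exists>s>0. \<forall>t. t > s \<longrightarrow> P ` B \<subseteq> (\<lambda>x. t *\<^sub>R x) ` V"
  proof (intro exI[of _ s] conjI allI impI)
    show "s > 0" by fact
    fix t assume t: "t > s"
    show "P ` B \<subseteq> (\<lambda>x. t *\<^sub>R x) ` V"
    proof
      fix y assume "y \<in> P ` B"
      then obtain b where b: "b \<in> B" "y = P b" by blast
      have "b \<in> (\<lambda>x. t *\<^sub>R x) ` W" using s t b(1) by blast
      then obtain w where w: "w \<in> W" "b = t *\<^sub>R w" by blast
      have "labs (P w) \<le> labs w" using dom by blast
      hence "P w \<in> W" using w(1) W(2) unfolding solid_def by blast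
      moreover have "y = t *\<^sub>R P w" using b w linear_scale[OF lin] by simp
      ultimately show "y \<in> (\<lambda>x. t *\<^sub>R x) ` V" using W(3) by blast
    qed
  qed
qed


theorem mainTheorem11:
  fixes T :: "'a::{ordered_real_vector,lattice} topology"
    and m :: "'a \<Rightarrow> 'a \<Rightarrow> 'a" and e :: 'a and J :: "'j itself"
  assumes "archimedean_vl (UNIV :: 'a set)"
    and "f_algebra m"
    and "locally_solid T"
    and "mult_unit m e"
    and "lebesgue_Orth_b T J \<or> lebesgue_Orth_c T J"
  shows "lebesgue_property T J"
  unfolding lebesgue_property_def
proof (intro allI impI)
  note arch = assms(1) and fa = assms(2) and ls = assms(3) and un = assms(4)
  have lt: "linear_topology T" using ls by (simp add: locally_solid_def)
  have e0: "0 \<le> e" using unit_nonneg[OF fa un] .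
  fix I :: "'j set" and le and u :: "'j \<Rightarrow> 'a"
  assume H: "directed_index I le \<and> decr_to_zero I le u"
  hence dir: "directed_index I le" and dz: "decr_to_zero I le u" by auto
  have udec: "\<forall>a\<in>I. \<forall>b\<in>I. le a b \<longrightarrow> u b \<le> u a" and upos: "\<forall>a\<in>I. 0 \<le> u a"
    and uinf: "\<forall>w. (\<forall>a\<in>I. w \<le> u a) \<longrightarrow> w \<le> 0" using dz by (auto simp: decr_to_zero_def)
  define v where "v a = inf (u a) e" for a
  define S where "S a = m (v a)" for a
  have v0: "0 \<le> v a" and ve: "v a \<le> e" if "a \<in> I" for a
    using upos that e0 by (auto simp: v_def)
  have Sdom: "\<forall>x. labs (S a x) \<le> labs x" if "a \<in> I" for a
    using fa_labs_le[OF fa un v0[OF that] ve[OF that]] by (simp add: S_def)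
  have Sorth: "orthomorphism (S a)" if "a \<in> I" for a
    using mult_orth[OF fa un v0[OF that] ve[OF that]] by (simp add: S_def)
  have Slin: "linear (S a)" if "a \<in> I" for a using Sorth[OF that] by (simp add: orthomorphism_def)
  have inb: "S a \<in> Orth_b T" if "a \<in> I" for a
    using Sorth[OF that] dom_bounded[OF ls Slin[OF that] Sdom[OF that]] by (simp add: Orth_b_def)
  have inc: "S a \<in> Orth_c T" if "a \<in> I" for a
    using Sorth[OF that] dom_continuous[OF ls Slin[OF that] Sdom[OF that]] by (simp add: Orth_c_def)
  have vdec: "\<forall>a\<in>I. \<forall>b\<in>I. le a b \<longrightarrow> v b \<le> v a"
    using udec by (auto simp: v_def intro: le_infI1)
  have vinf: "\<forall>w. (\<forall>a\<in>I. w \<le> v a) \<longrightarrow> w \<le> 0"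
    using uinf by (auto simp: v_def)
  have vpos: "\<forall>a\<in>I. 0 \<le> v a" using v0 by blast
  have odz: "orth_decr_to_zero Os I le S" if "\<forall>a\<in>I. S a \<in> Os" for Os
    unfolding orth_decr_to_zero_def
  proof (intro conjI ballI impI)
    show "S a \<in> Os" if "a \<in> I" for a using that \<open>\<forall>a\<in>I. S a \<in> Os\<close> by blast
    show "op_le (S b) (S a)" if "a \<in> I" "b \<in> I" "le a b" for a b
      using that vdec fa_mono_l[OF fa] by (simp add: op_le_def S_def)
    show "op_le (\<lambda>_. 0) (S a)" if "a \<in> I" for a
      using that v0 fa_pos[OF fa] by (simp add: op_le_def S_def)
    fix R assume R: "R \<in> Os" "\<forall>a\<in>I. op_le R (S a)"
    show "op_le R (\<lambda>_. 0)" unfolding op_le_def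
    proof (intro allI impI)
      fix x :: 'a assume x0: "0 \<le> x"
      define y where "y = sup (R x) 0"
      have "\<forall>a\<in>I. y \<le> m (v a) x"
        using R(2) x0 v0 fa_pos[OF fa] by (auto simp: y_def op_le_def S_def)
      hence "y = 0" using fa_order_cont[OF fa arch dir vdec vpos vinf x0] by (simp add: y_def)
      thus "R x \<le> 0" by (metis sup.cobounded1 y_def)
    qed
  qed
  obtain a0 where a0: "a0 \<in> I" using dir unfolding directed_index_def by blast
  define w where "w = u a0 + e"
  have fin: "u a \<in> W" if W: "solid W" and a: "a \<in> I" "le a0 a" and SW: "S a w \<in> W" for a W
  proof -
    have "u a \<le> u a0" using udec a a0 by blast
    hence "u a \<le> m (inf (u a) e) (u a0 + e)" using fa_unit_trick[OF fa un] upos a by blast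
    hence "u a \<le> S a w" by (simp add: S_def v_def w_def)
    moreover have "labs (u a) = u a" using upos a labs_pos by blast
    moreover have "S a w \<le> labs (S a w)" by (simp add: labs_def)
    ultimately have "labs (u a) \<le> labs (S a w)" by simp
    thus ?thesis using W SW unfolding solid_def by blast
  qed
  show "net_to_zero T I le u" unfolding net_to_zero_def
  proof (intro allI impI)
    fix V assume V: "zero_nbhd T V"
    obtain W where W: "zero_nbhd T W" "solid W" "W \<subseteq> V" using ls_solid_sub[OF ls V] by blast
    have "\<exists>a1\<in>I. \<forall>a\<in>I. le a1 a \<longrightarrow> S a w \<in> W"
      using assms(5)
    proof
      assume Lb: "lebesgue_Orth_b T J"
      have "orth_decr_to_zero (Orth_b T) I le S" using odz inb by blast
      hence "orth_b_to_zero T I le S" using Lb dir unfolding lebesgue_Orth_b_def by blast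
      hence "\<exists>a1\<in>I. \<forall>a\<in>I. le a1 a \<longrightarrow> S a ` {w} \<subseteq> W"
        using lt_singleton_bounded[OF lt, of w] W(1) unfolding orth_b_to_zero_def by blast
      thus ?thesis by blast
    next
      assume Lc: "lebesgue_Orth_c T J"
      have "orth_decr_to_zero (Orth_c T) I le S" using odz inc by blast
      hence "orth_c_to_zero T I le S" using Lc dir unfolding lebesgue_Orth_c_def by blast
      then obtain U where U: "zero_nbhd T U"
        "\<forall>\<epsilon>>0. \<exists>a0\<in>I. \<forall>a\<in>I. le a0 a \<longrightarrow> S a ` U \<subseteq> (\<lambda>x. \<epsilon> *\<^sub>R x) ` W"
        using W(1) unfolding orth_c_to_zero_def by blast
      obtain c where c: "c > 0" "w \<in> (\<lambda>x. c *\<^sub>R x) ` U" using lt_absorb[OF lt U(1)] by blast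
      then obtain y where y: "y \<in> U" "w = c *\<^sub>R y" by blast
      have "1/c > 0" using c by simp
      then obtain a1 where a1: "a1 \<in> I" "\<forall>a\<in>I. le a1 a \<longrightarrow> S a ` U \<subseteq> (\<lambda>x. (1/c) *\<^sub>R x) ` W"
        using U(2) by blast
      have "S a w \<in> W" if a: "a \<in> I" "le a1 a" for a
      proof -
        have "S a y \<in> (\<lambda>x. (1/c) *\<^sub>R x) ` W" using a1 a y by blast
        then obtain z where z: "z \<in> W" "S a y = (1/c) *\<^sub>R z" by blast
        have "S a w = c *\<^sub>R S a y" using y linear_scale[OF Slin[OF a(1)]] by simp
        also have "\<dots> = z" using z c by simp
        finally show ?thesis using z by simp
      qed
      thus ?thesis using a1 by blast
    qed
    then obtain a1 where a1: "a1 \<in> I" "\<forall>a\<in>I. le a1 a \<longrightarrow> S a w \<in> W" by blast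
    obtain a2 where a2: "a2 \<in> I" "le a0 a2" "le a1 a2" using dir a0 a1 unfolding directed_index_def by blast
    have trans: "\<forall>a\<in>I. \<forall>b\<in>I. \<forall>c\<in>I. le a b \<and> le b c \<longrightarrow> le a c"
      using dir unfolding directed_index_def by blast
    show "\<exists>a0\<in>I. \<forall>a\<in>I. le a0 a \<longrightarrow> u a \<in> V"
    proof (intro bexI[OF _ a2(1)] ballI impI)
      fix a assume a: "a \<in> I" "le a2 a"
      have "le a0 a" using trans a0 a2 a by blast
      moreover have "le a1 a" using trans a1(1) a2 a by blast
      ultimately have "u a \<in> W" using fin[OF W(2) a(1)] a1 a by blast
      thus "u a \<in> V" using W(3) by blast
    qed
  qed
qed

end
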